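(* Assume $|F|>2$. Then $E$ has an asymptotic sequence, i.e. there is a sequence $(A_n)_{n\in\omega}$ of pairwise disjoint asymptotic subsets of $E\setminus\{0\}$.
   Context: $F$ is a countable field and $E$ is a countably infinite-dimensional $F$-vector space. A set $A\subseteq E\setminus\{0\}$ is asymptotic if $V\cap A\neq\emptyset$ for every infinite-dimensional subspace $V$ of $E$. *)

theory Defs
  imports Complex_Main "HOL-Library.Countable_Set"
begin

text \<open>Vector spaces are given by the library locale vector_space with a scalar
  multiplication scale :: 'a::field => 'v => 'v; the ambient space E is the whole type 'v.\<close>

definition inf_dim_subspace :: "('a::field \<Rightarrow> 'v::ab_group_add \<Rightarrow> 'v) \<Rightarrow> 'v set \<Rightarrow> bool" where
  "inf_dim_subspace scale V \<longleftrightarrow> module.subspace scale V \<and>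
     (\<exists>B. B \<subseteq> V \<and> \<not> module.dependent scale B \<and> module.span scale B = V \<and> infinite B)"

definition asymptotic :: "('a::field \<Rightarrow> 'v::ab_group_add \<Rightarrow> 'v) \<Rightarrow> 'v set \<Rightarrow> bool" where
  "asymptotic scale A \<longleftrightarrow> A \<subseteq> UNIV - {0} \<and>
     (\<forall>V. inf_dim_subspace scale V \<longrightarrow> V \<inter> A \<noteq> {})"

end

theory Submission
  imports Defs
begin


fun chg :: "'a list \<Rightarrow> nat" where
  "chg (x # y # xs) = (if x = y then 0 else 1) + chg (y # xs)"
| "chg _ = 0"

lemma chg_append:
  "l1 \<noteq> [] \<Longrightarrow> l2 \<noteq> [] \<Longrightarrow>
   chg (l1 @ l2) = chg l1 + chg l2 + (if last l1 = hd l2 then 0 else 1)"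
proof (induction l1 rule: chg.induct)
  case (1 x y xs) then show ?case by simp
next
  case ("2_1") then show ?case by simp
next
  case ("2_2" x) then show ?case by (cases l2) auto
qed

lemma chg_map_mult:
  fixes c :: "'a::field"
  assumes "c \<noteq> 0" shows "chg (map ((*) c) l) = chg l"
  using assms by (induction l rule: chg.induct) auto

lemma sorted_list_union:
  fixes A C :: "nat set"
  assumes "finite A" "finite C" "\<And>a b. a \<in> A \<Longrightarrow> b \<in> C \<Longrightarrow> a < b"
  shows "sorted_list_of_set (A \<union> C) = sorted_list_of_set A @ sorted_list_of_set C"
proof -
  have d: "A \<inter> C = {}" using assms(3) by force
  have "sorted_wrt (<) (sorted_list_of_set A @ sorted_list_of_set C) \<and>
        set (sorted_list_of_set A @ sorted_list_of_set C) = A \<union> C \<and>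
        length (sorted_list_of_set A @ sorted_list_of_set C) = card (A \<union> C)"
    using assms d by (auto simp: sorted_wrt_append card_Un_disjoint)
  moreover have "finite (A \<union> C)" using assms by simp
  ultimately show ?thesis
    using sorted_list_of_set_unique by metis
qed

lemma odd_decomp_unique:
  fixes m n q p :: nat
  assumes "2^m * (2*q+1) = 2^n * (2*p+1)" shows "m = n"
proof (rule ccontr)
  assume "m \<noteq> n"
  { fix m n q p :: nat assume h: "2^m * (2*q+1) = 2^n * (2*p+1)" "m < n"
    have "(2::nat)^n = 2^m * 2^(n-m)"
      by (metis h(2) le_add_diff_inverse less_imp_le power_add)
    then have "2^m * (2*q+1) = 2^m * (2^(n-m) * (2*p+1))"
      using h(1) by (metis mult.assoc)
    then have "2*q+1 = 2^(n-m) * (2*p+1)"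
      by (subst (asm) mult_left_cancel) simp_all
    moreover have "even (2^(n-m) * (2*p+1::nat))" using h(2) by simp
    ultimately have False by presburger }
  then show False using assms \<open>m \<noteq> n\<close>
    by (metis linorder_neqE_nat)
qed

lemma find_odd:
  fixes I n :: nat
  shows "\<exists>k q. I \<le> k \<and> k \<le> I + 4 * 2^n \<and> k + 1 = 2^n * (2*q+1)"
proof -
  define t :: nat where "t = 2^n"
  have t: "t > 0" by (simp add: t_def)
  define a where "a = (I+1) div (2*t)"
  define b where "b = (I+1) mod (2*t)"
  have e: "I + 1 = 2*t*a + b" by (simp add: a_def b_def)
  have b: "b < 2*t" using t by (simp add: b_def)
  have "t * (2*(a+1)+1) = 2*t*a + 3*t" by (simp add: algebra_simps)
  then show ?thesis unfolding t_def[symmetric]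
    using e b t
    by (intro exI[of _ "t * (2*(a+1)+1) - 1"] exI[of _ "a+1"]) auto
qed



locale coordsys = vector_space scale
  for scale :: "'a::field \<Rightarrow> 'v::ab_group_add \<Rightarrow> 'v" (infixr \<open>*s\<close> 75) +
  fixes B :: "'v set" and e :: "nat \<Rightarrow> 'v"
  assumes indB: "independent B" and spanB: "span B = UNIV" and bij: "bij_betw e UNIV B"
begin

definition coef :: "'v \<Rightarrow> nat \<Rightarrow> 'a" where "coef v i = representation B v (e i)"
definition supp :: "'v \<Rightarrow> nat set" where "supp v = {i. coef v i \<noteq> 0}"
definition word :: "'v \<Rightarrow> 'a list" where "word v = map (coef v) (sorted_list_of_set (supp v))"

lemma coef_add: "coef (u + w) i = coef u i + coef w i"
  unfolding coef_def using representation_add[OF indB, of w u] spanB by simp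

lemma coef_scale: "coef (c *s u) i = c * coef u i"
  unfolding coef_def using representation_scale[OF indB, of u c] spanB by simp

lemma coef_zero: "coef 0 i = 0"
  unfolding coef_def by (simp add: representation_zero)

lemma finite_supp: "finite (supp v)"
proof -
  have "supp v = e -` {b. representation B v b \<noteq> 0}" by (auto simp: supp_def coef_def)
  moreover have "inj e" using bij by (simp add: bij_betw_def)
  ultimately show ?thesis using finite_vimageI[OF finite_representation] by simp
qed

lemma supp_empty_zero: assumes "supp v = {}" shows "v = 0"
proof -
  have "representation B v b = 0" for b
  proof (cases "b \<in> B")
    case True
    then obtain i where "b = e i" using bij by (metis bij_betw_inv_into_right)
    then show ?thesis using assms by (auto simp: supp_def coef_def)
  next
    case False then show ?thesis using representation_ne_zero by blast
  qed
  then have "(\<Sum>b | representation B v b \<noteq> 0. representation B v b *s b) = 0" by simp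
  then show ?thesis using sum_nonzero_representation_eq[OF indB, of v] spanB by simp
qed

lemma word_nonempty: "v \<noteq> 0 \<Longrightarrow> word v \<noteq> []"
  using supp_empty_zero finite_supp by (auto simp: word_def)

lemma word_combine:
  assumes u: "supp u \<subseteq> {..<M}" and w: "supp w \<subseteq> {M..}" and c: "c \<noteq> 0"
  shows "word (u + c *s w) = word u @ map ((*) c) (word w)"
proof -
  have z: "coef u i = 0 \<or> coef w i = 0" for i
    using u w by (force simp: supp_def)
  have s: "supp (u + c *s w) = supp u \<union> supp w"
  proof (rule set_eqI)
    fix i show "i \<in> supp (u + c *s w) \<longleftrightarrow> i \<in> supp u \<union> supp w"
      using z[of i] c by (auto simp: supp_def coef_add coef_scale)
  qed
  have o: "\<And>a b. a \<in> supp u \<Longrightarrow> b \<in> supp w \<Longrightarrow> a < b" using u w by force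
  have L: "sorted_list_of_set (supp (u + c *s w)) = sorted_list_of_set (supp u) @ sorted_list_of_set (supp w)"
    unfolding s by (rule sorted_list_union[OF finite_supp finite_supp o])
  have 1: "map (coef (u + c *s w)) (sorted_list_of_set (supp u)) = map (coef u) (sorted_list_of_set (supp u))"
    using z finite_supp[of u] by (intro map_cong) (auto simp: coef_add coef_scale supp_def)
  have 2: "map (coef (u + c *s w)) (sorted_list_of_set (supp w)) = map ((*) c) (map (coef w) (sorted_list_of_set (supp w)))"
    using z finite_supp[of w] by (auto simp: coef_add coef_scale supp_def)
  show ?thesis unfolding word_def L using 1 2 by simp
qed

lemma chg_combine:
  assumes u: "supp u \<subseteq> {..<M}" and w: "supp w \<subseteq> {M..}" and c: "c \<noteq> 0"
    and "u \<noteq> 0" "w \<noteq> 0"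
  shows "chg (word (u + c *s w)) = chg (word u) + chg (word w) +
            (if last (word u) = c * hd (word w) then 0 else 1)"
  using word_nonempty[OF assms(4)] word_nonempty[OF assms(5)]
  by (simp add: word_combine[OF u w c] chg_append chg_map_mult[OF c] hd_map)

lemma word_hd_nz: "v \<noteq> 0 \<Longrightarrow> hd (word v) \<noteq> 0"
proof -
  assume "v \<noteq> 0"
  then have "word v \<noteq> []" by (rule word_nonempty)
  then have "hd (word v) \<in> set (word v)" by simp
  then show ?thesis using finite_supp[of v] by (auto simp: word_def supp_def)
qed

lemma word_last_nz: "v \<noteq> 0 \<Longrightarrow> last (word v) \<noteq> 0"
proof -
  assume "v \<noteq> 0"
  then have "word v \<noteq> []" by (rule word_nonempty)
  then have "last (word v) \<in> set (word v)" by simp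
  then show ?thesis using finite_supp[of v] by (auto simp: word_def supp_def)
qed

end


context coordsys begin

definition big :: "'v set \<Rightarrow> bool" where "big W \<longleftrightarrow> (\<forall>T. finite T \<longrightarrow> \<not> W \<subseteq> span T)"

lemma cut_step:
  assumes W: "subspace W" and bW: "big W"
  shows "subspace {v\<in>W. coef v N = 0} \<and> big {v\<in>W. coef v N = 0}"
proof
  show "subspace {v\<in>W. coef v N = 0}"
    using W unfolding subspace_def by (auto simp: coef_add coef_scale coef_zero)
  show "big {v\<in>W. coef v N = 0}"
    unfolding big_def
  proof (intro allI impI notI)
    fix T assume T: "finite T" and sub: "{v\<in>W. coef v N = 0} \<subseteq> span T"
    show False
    proof (cases "\<forall>w\<in>W. coef w N = 0")
      case True
      then have "W \<subseteq> span T" using sub by auto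
      then show False using bW T by (auto simp: big_def)
    next
      case False
      then obtain c0 where c0: "c0 \<in> W" "coef c0 N \<noteq> 0" by auto
      have "W \<subseteq> span (insert c0 T)"
      proof
        fix w assume w: "w \<in> W"
        define k where "k = coef w N / coef c0 N"
        have "w - k *s c0 \<in> W" using W w c0 by (simp add: subspace_diff subspace_scale)
        moreover have "coef (w - k *s c0) N = 0"
          using c0 by (simp add: diff_conv_add_uminus coef_add coef_scale k_def
              flip: scale_minus_left)
        ultimately have "w - k *s c0 \<in> span T" using sub by auto
        then have a: "w - k *s c0 \<in> span (insert c0 T)" by (meson span_mono subset_insertI subsetD)
        have b: "k *s c0 \<in> span (insert c0 T)" by (simp add: span_base span_scale)
        have "w = (w - k *s c0) + k *s c0" by simp
        then show "w \<in> span (insert c0 T)" using span_add[OF a b] by simp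
      qed
      then show False using bW T by (auto simp: big_def)
    qed
  qed
qed

lemma cut:
  assumes W: "subspace W" and bW: "big W"
  shows "subspace {v\<in>W. \<forall>i<N. coef v i = 0} \<and> big {v\<in>W. \<forall>i<N. coef v i = 0}"
proof (induction N)
  case 0 then show ?case using W bW by simp
next
  case (Suc N)
  have "{v\<in>W. \<forall>i<Suc N. coef v i = 0} = {v\<in>{v\<in>W. \<forall>i<N. coef v i = 0}. coef v N = 0}"
    by (auto simp: less_Suc_eq)
  then show ?case using cut_step[of "{v\<in>W. \<forall>i<N. coef v i = 0}" N] Suc.IH by simp
qed

lemma exists_tail:
  assumes "inf_dim_subspace scale V"
  shows "subspace V \<and> (\<forall>N. \<exists>v\<in>V. v \<noteq> 0 \<and> (\<forall>i<N. coef v i = 0))"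
proof -
  from assms obtain C where V: "subspace V" and C: "C \<subseteq> V" "independent C" "infinite C"
    unfolding inf_dim_subspace_def by auto
  have bV: "big V"
    unfolding big_def
  proof (intro allI impI notI)
    fix T assume "finite T" "V \<subseteq> span T"
    then show False using independent_span_bound[of T C] C by auto
  qed
  show ?thesis
  proof (intro conjI allI V)
    fix N
    from cut[OF V bV, of N] have "\<not> {v\<in>V. \<forall>i<N. coef v i = 0} \<subseteq> span {}"
      unfolding big_def by (meson finite.emptyI)
    then show "\<exists>v\<in>V. v \<noteq> 0 \<and> (\<forall>i<N. coef v i = 0)" by (auto simp: span_empty)
  qed
qed

lemma supp_tail: "(\<forall>i<N. coef v i = 0) \<Longrightarrow> supp v \<subseteq> {N..}"
  by (auto simp: supp_def not_le[symmetric])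

lemma supp_bound: "\<exists>M. N \<le> M \<and> supp v \<subseteq> {..<M}"
proof -
  obtain M where "\<forall>i\<in>supp v. i < M" using finite_supp[of v] unfolding finite_nat_iff_bounded by auto
  then show ?thesis by (intro exI[of _ "max N M"]) auto
qed

lemma realize:
  assumes V: "subspace V" and t: "\<forall>N. \<exists>v\<in>V. v \<noteq> 0 \<and> (\<forall>i<N. coef v i = 0)"
    and F3: "\<And>d::'a. \<exists>c. c \<noteq> 0 \<and> c \<noteq> d"
  shows "\<exists>I. \<forall>k. I \<le> k \<and> k \<le> I + r \<longrightarrow>
           (\<exists>v\<in>V. v \<noteq> 0 \<and> (\<forall>i<N. coef v i = 0) \<and> chg (word v) = k)"
proof (induction r arbitrary: N)
  case 0
  from t obtain v where "v \<in> V" "v \<noteq> 0" "\<forall>i<N. coef v i = 0" by blast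
  then show ?case by (intro exI[of _ "chg (word v)"]) auto
next
  case (Suc r)
  from t obtain u where u: "u \<in> V" "u \<noteq> 0" "\<forall>i<N. coef u i = 0" by blast
  obtain M where M: "N \<le> M" "supp u \<subseteq> {..<M}" using supp_bound by blast
  from Suc.IH[of M] obtain I0 where I0: "\<And>k. I0 \<le> k \<Longrightarrow> k \<le> I0 + r \<Longrightarrow>
           (\<exists>v\<in>V. v \<noteq> 0 \<and> (\<forall>i<M. coef v i = 0) \<and> chg (word v) = k)" by blast
  have comb: "\<exists>v\<in>V. v \<noteq> 0 \<and> (\<forall>i<N. coef v i = 0) \<and> chg (word v) = chg (word u) + chg (word w) + (if b then 0 else 1)"
    if w: "w \<in> V" "w \<noteq> 0" "\<forall>i<M. coef w i = 0" for w b
  proof -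
    have hw: "hd (word w) \<noteq> 0" using word_hd_nz w(2) .
    have lu: "last (word u) \<noteq> 0" using word_last_nz u(2) .
    obtain c where c: "c \<noteq> 0" "(last (word u) = c * hd (word w)) = b"
    proof (cases b)
      case True
      then show ?thesis using that[of "last (word u) / hd (word w)"] hw lu by auto
    next
      case False
      obtain c where "c \<noteq> 0" "c \<noteq> last (word u) / hd (word w)" using F3 by blast
      then show ?thesis using that[of c] hw False by (auto simp: field_simps)
    qed
    have sw: "supp w \<subseteq> {M..}" using supp_tail w(3) by blast
    have ch: "chg (word (u + c *s w)) = chg (word u) + chg (word w) + (if b then 0 else 1)"
      using chg_combine[OF M(2) sw c(1) u(2) w(2)] c(2) by simp
    have "u + c *s w \<in> V" using V u(1) w(1) by (simp add: subspace_add subspace_scale)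
    moreover have "u + c *s w \<noteq> 0"
    proof
      assume "u + c *s w = 0"
      then have "word (u + c *s w) = []" by (simp add: word_def supp_def coef_zero)
      then show False using word_nonempty[OF u(2)] word_combine[OF M(2) sw c(1)] by simp
    qed
    moreover have "\<forall>i<N. coef (u + c *s w) i = 0" using u(3) w(3) M(1) by (simp add: coef_add coef_scale)
    ultimately show ?thesis using ch by blast
  qed
  show ?case
  proof (intro exI[of _ "chg (word u) + I0"] allI impI)
    fix k assume k: "chg (word u) + I0 \<le> k \<and> k \<le> chg (word u) + I0 + Suc r"
    show "\<exists>v\<in>V. v \<noteq> 0 \<and> (\<forall>i<N. coef v i = 0) \<and> chg (word v) = k"
    proof (cases "k \<le> chg (word u) + I0 + r")
      case True
      have "\<exists>w\<in>V. w \<noteq> 0 \<and> (\<forall>i<M. coef w i = 0) \<and> chg (word w) = k - chg (word u)"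
        using I0[of "k - chg (word u)"] k True by simp
      then obtain w where "w \<in> V" "w \<noteq> 0" "\<forall>i<M. coef w i = 0" "chg (word w) = k - chg (word u)"
        by blast
      then show ?thesis using comb[of w True] k by auto
    next
      case False
      have "\<exists>w\<in>V. w \<noteq> 0 \<and> (\<forall>i<M. coef w i = 0) \<and> chg (word w) = I0 + r"
        using I0[of "I0 + r"] by simp
      then obtain w where "w \<in> V" "w \<noteq> 0" "\<forall>i<M. coef w i = 0" "chg (word w) = I0 + r"
        by blast
      then show ?thesis using comb[of w False] k False by auto
    qed
  qed
qed

end


theorem lemma8p4:
  fixes scale :: "'a::field \<Rightarrow> 'v::ab_group_add \<Rightarrow> 'v"
  assumes "vector_space scale"
    and "countable (UNIV :: 'a set)"
    and "infinite (UNIV :: 'a set) \<or> card (UNIV :: 'a set) > 2"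
    and "\<exists>B. \<not> module.dependent scale B \<and> module.span scale B = UNIV \<and> countable B \<and> infinite B"
  shows "\<exists>A :: nat \<Rightarrow> 'v set. (\<forall>n. asymptotic scale (A n)) \<and>
           (\<forall>m n. m \<noteq> n \<longrightarrow> A m \<inter> A n = {})"
proof -
  obtain B where B: "\<not> module.dependent scale B" "module.span scale B = UNIV" "countable B" "infinite B"
    using assms(4) by blast
  interpret vector_space scale by (rule assms(1))
  interpret C: coordsys scale B "from_nat_into B"
    by unfold_locales (use B bij_betw_from_nat_into in auto)
  have F3: "\<exists>c. c \<noteq> 0 \<and> c \<noteq> d" for d :: 'a
  proof (rule ccontr)
    assume "\<not> (\<exists>c. c \<noteq> 0 \<and> c \<noteq> d)"
    then have U: "(UNIV :: 'a set) \<subseteq> {0, d}" by auto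
    then have "finite (UNIV :: 'a set)" using finite_subset by blast
    moreover have "card {0::'a, d} \<le> 2" by (cases "d = 0") auto
    moreover have "card (UNIV :: 'a set) \<le> card {0::'a, d}" using card_mono[OF _ U] by simp
    ultimately have "finite (UNIV :: 'a set) \<and> card (UNIV :: 'a set) \<le> 2" by linarith
    then show False using assms(3) by simp
  qed
  define A where "A n = {v. v \<noteq> 0 \<and> (\<exists>q. chg (C.word v) + 1 = 2^n * (2*q+1))}" for n
  have asym: "asymptotic scale (A n)" for n
    unfolding asymptotic_def
  proof (intro conjI allI impI)
    show "A n \<subseteq> UNIV - {0}" by (auto simp: A_def)
    fix V assume "inf_dim_subspace scale V"
    from C.exists_tail[OF this] have V: "subspace V" and t: "\<forall>N. \<exists>v\<in>V. v \<noteq> 0 \<and> (\<forall>i<N. C.coef v i = 0)"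
      by auto
    obtain I where I: "\<And>k. I \<le> k \<Longrightarrow> k \<le> I + 4 * 2^n \<Longrightarrow>
           (\<exists>v\<in>V. v \<noteq> 0 \<and> (\<forall>i<0. C.coef v i = 0) \<and> chg (C.word v) = k)"
      using C.realize[OF V t F3, of "4 * 2^n" 0] by blast
    obtain k q where kq: "I \<le> k" "k \<le> I + 4 * 2^n" "k + 1 = 2^n * (2*q+1)"
      using find_odd[of I n] by blast
    from I[OF kq(1,2)] obtain v where "v \<in> V" "v \<noteq> 0" "chg (C.word v) = k" by blast
    then have "v \<in> V \<inter> A n" using kq(3) by (auto simp: A_def)
    then show "V \<inter> A n \<noteq> {}" by blast
  qed
  have disj: "A m \<inter> A n = {}" if "m \<noteq> n" for m n
  proof (rule ccontr)
    assume "A m \<inter> A n \<noteq> {}"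
    then obtain v where v: "v \<in> A m" "v \<in> A n" by blast
    from v(1) obtain q where "chg (C.word v) + 1 = 2^m * (2*q+1)" unfolding A_def by blast
    moreover from v(2) obtain p where "chg (C.word v) + 1 = 2^n * (2*p+1)" unfolding A_def by blast
    ultimately
    have "2^m * (2*q+1) = 2^n * (2*p+1)" by simp
    then show False using odd_decomp_unique that by blast
  qed
  show ?thesis using asym disj by blast
qed


end
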